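(* If $A,B\in\mathcal{D}$ and $d(A)<d(B)$, then there exists $D\in\mathcal{D}$ such that $A\subseteq D\subseteq A\cup B$ and $d(D)=d(B)$.
   Context: $\mathbb{N}=\{1,2,3,\dots\}$. For $A\subseteq\mathbb{N}$ let $A(n)=|A\cap[1,n]|$. Let $\mathcal{D}$ be the collection of all $A\subseteq\mathbb{N}$ for which the asymptotic density $d(A)=\lim_{n\to\infty}\frac{A(n)}{n}$ exists. *)

theory Defs
  imports Complex_Main
begin

text \<open>Counting function A(n) = |A \<inter> [1,n]|. Subsets of the positive naturals
  are modelled as nat sets not containing 0.\<close>
definition counting :: "nat set \<Rightarrow> nat \<Rightarrow> nat" where
  "counting A n = card (A \<inter> {1..n})"

definition has_density :: "nat set \<Rightarrow> real \<Rightarrow> bool" where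
  "has_density A \<delta> \<longleftrightarrow> ((\<lambda>n. real (counting A n) / real n) \<longlongrightarrow> \<delta>) sequentially"

definition density_sets :: "nat set set" where
  "density_sets = {A. A \<subseteq> {1..} \<and> (\<exists>\<delta>. has_density A \<delta>)}"

definition density :: "nat set \<Rightarrow> real" where
  "density A = lim (\<lambda>n. real (counting A n) / real n)"

end

theory Submission
  imports Defs
begin

fun cnt :: "nat set \<Rightarrow> nat set \<Rightarrow> real \<Rightarrow> nat \<Rightarrow> nat" where
  "cnt A B b 0 = 0"
| "cnt A B b (Suc n) = cnt A B b n +
     (if Suc n \<in> A \<or> (Suc n \<in> B \<and> real (cnt A B b n) < b * real (Suc n)) then 1 else 0)"

definition Dset :: "nat set \<Rightarrow> nat set \<Rightarrow> real \<Rightarrow> nat set" where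
  "Dset A B b = {k. 1 \<le> k \<and> (k \<in> A \<or> (k \<in> B \<and> real (cnt A B b (k - 1)) < b * real k))}"

lemma counting_0[simp]: "counting S 0 = 0"
  by (simp add: counting_def)

lemma counting_Suc: "counting S (Suc n) = counting S n + (if Suc n \<in> S then 1 else 0)"
proof -
  have e: "S \<inter> {1..Suc n} = (if Suc n \<in> S then insert (Suc n) (S \<inter> {1..n}) else S \<inter> {1..n})" using le_Suc_eq by auto
  show ?thesis
    unfolding counting_def e by simp
qed

lemma counting_D: "counting (Dset A B b) n = cnt A B b n"
proof (induction n)
  case 0 then show ?case by simp
next
  case (Suc n)
  have "(Suc n \<in> Dset A B b) = (Suc n \<in> A \<or> (Suc n \<in> B \<and> real (cnt A B b n) < b * real (Suc n)))"
    by (simp add: Dset_def)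
  then show ?case using Suc by (simp add: counting_Suc)
qed

lemma upper: "\<exists>m\<le>n. real (cnt A B b n) \<le> b * real m + 1 + real (counting A n) - real (counting A m)"
proof (induction n)
  case 0 then show ?case by simp
next
  case (Suc n)
  then obtain m where m: "m \<le> n" "real (cnt A B b n) \<le> b * real m + 1 + real (counting A n) - real (counting A m)" by blast
  show ?case
  proof (cases "Suc n \<in> A")
    case True
    then show ?thesis using m by (intro exI[of _ m]) (auto simp: counting_Suc)
  next
    case False
    show ?thesis
    proof (cases "Suc n \<in> B \<and> real (cnt A B b n) < b * real (Suc n)")
      case True
      then show ?thesis using False by (intro exI[of _ "Suc n"]) (auto simp: counting_Suc)
    next
      case F2: False
      then show ?thesis using False m by (intro exI[of _ m]) (auto simp: counting_Suc)
    qed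
  qed
qed

lemma lower: "\<exists>m\<le>n. real (cnt A B b n) \<ge> b * real m + real (counting B n) - real (counting B m)"
proof (induction n)
  case 0 then show ?case by simp
next
  case (Suc n)
  then obtain m where m: "m \<le> n" "real (cnt A B b n) \<ge> b * real m + real (counting B n) - real (counting B m)" by blast
  show ?case
  proof (cases "Suc n \<in> A \<or> (Suc n \<in> B \<and> real (cnt A B b n) < b * real (Suc n))")
    case True
    then show ?thesis using m by (intro exI[of _ m]) (auto simp: counting_Suc)
  next
    case False
    show ?thesis
    proof (cases "Suc n \<in> B")
      case True
      then show ?thesis using False by (intro exI[of _ "Suc n"]) (auto simp: counting_Suc)
    next
      case F2: False
      then show ?thesis using False m by (intro exI[of _ m]) (auto simp: counting_Suc)
    qed
  qed
qed

lemma err: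
  assumes "has_density S c" "\<epsilon> > 0"
  shows "\<exists>K\<ge>0. \<forall>n. \<bar>real (counting S n) - c * real n\<bar> \<le> \<epsilon> * real n + K"
proof -
  from assms have "(\<lambda>n. real (counting S n) / real n) \<longlonglongrightarrow> c" by (simp add: has_density_def)
  from LIMSEQ_D[OF this assms(2)] obtain N where N: "\<And>n. n \<ge> N \<Longrightarrow> \<bar>real (counting S n) / real n - c\<bar> < \<epsilon>"
    by auto
  define M where "M = max N 1"
  define K where "K = (\<Sum>k<M. \<bar>real (counting S k) - c * real k\<bar>)"
  have K0: "K \<ge> 0" unfolding K_def by (intro sum_nonneg) auto
  have "\<bar>real (counting S n) - c * real n\<bar> \<le> \<epsilon> * real n + K" for n
  proof (cases "n < M")
    case True
    then have "\<bar>real (counting S n) - c * real n\<bar> \<le> K"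
      unfolding K_def by (intro member_le_sum) auto
    moreover have "\<epsilon> * real n \<ge> 0" using assms by simp
    ultimately show ?thesis by linarith
  next
    case False
    then have n: "n \<ge> N" "n \<ge> 1" unfolding M_def by auto
    then have npos: "real n > 0" by simp
    have "\<bar>real (counting S n) / real n - c\<bar> < \<epsilon>" using N n by blast
    then have "\<bar>real (counting S n) / real n - c\<bar> * real n \<le> \<epsilon> * real n"
      using npos by (intro mult_right_mono) auto
    moreover have "\<bar>real (counting S n) / real n - c\<bar> * real n = \<bar>real (counting S n) - c * real n\<bar>"
      using npos by (simp add: abs_mult[symmetric] field_simps)
    ultimately show ?thesis using K0 by linarith
  qed
  then show ?thesis using K0 by blast
qed

lemma main:
  assumes A: "has_density A a" and B: "has_density B b" and ab: "a \<le> b"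
  shows "has_density (Dset A B b) b"
  unfolding has_density_def counting_D
proof (rule LIMSEQ_I)
  fix r :: real assume r: "r > 0"
  define e where "e = r / 8"
  have e: "e > 0" using r by (simp add: e_def)
  obtain K1 where K1: "K1 \<ge> 0" "\<And>n. \<bar>real (counting A n) - a * real n\<bar> \<le> e * real n + K1"
    using err[OF A e] by blast
  obtain K2 where K2: "K2 \<ge> 0" "\<And>n. \<bar>real (counting B n) - b * real n\<bar> \<le> e * real n + K2"
    using err[OF B e] by blast
  define K where "K = 2 * K1 + 2 * K2 + 1"
  have K: "K > 0" using K1 K2 by (simp add: K_def)
  have bnd: "\<bar>real (cnt A B b n) - b * real n\<bar> \<le> 2 * e * real n + K" for n
  proof -
    obtain m where m: "m \<le> n" "real (cnt A B b n) \<le> b * real m + 1 + real (counting A n) - real (counting A m)"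
      using upper by blast
    have mn: "real m \<le> real n" using m by simp
    have "\<bar>real (counting A m) - a * real m\<bar> \<le> e * real m + K1" by (rule K1)
    moreover have "e * real m \<le> e * real n" using mn e by simp
    moreover have "\<bar>real (counting A n) - a * real n\<bar> \<le> e * real n + K1" by (rule K1)
    moreover have "a * (real n - real m) \<le> b * (real n - real m)" using ab mn by (intro mult_right_mono) auto
    ultimately have up: "real (cnt A B b n) \<le> b * real n + 2 * e * real n + K"
      using m(2) K2 unfolding K_def by (simp add: algebra_simps abs_le_iff)
    obtain m' where m': "m' \<le> n" "real (cnt A B b n) \<ge> b * real m' + real (counting B n) - real (counting B m')"
      using lower by blast
    have mn': "real m' \<le> real n" using m' by simp
    have "\<bar>real (counting B m') - b * real m'\<bar> \<le> e * real m' + K2" by (rule K2)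
    moreover have "e * real m' \<le> e * real n" using mn' e by simp
    moreover have "\<bar>real (counting B n) - b * real n\<bar> \<le> e * real n + K2" by (rule K2)
    ultimately have lo: "real (cnt A B b n) \<ge> b * real n - 2 * e * real n - K"
      using m'(2) K1 unfolding K_def by (simp add: algebra_simps abs_le_iff)
    show ?thesis using up lo by (simp add: abs_le_iff)
  qed
  obtain N :: nat where N: "real N > K / e" using reals_Archimedean2 by blast
  show "\<exists>no. \<forall>n\<ge>no. norm (real (cnt A B b n) / real n - b) < r"
  proof (intro exI allI impI)
    fix n assume n: "n \<ge> Suc N"
    have npos: "real n > 0" using n by simp
    have "K < e * real n"
    proof -
      have "K / e < real n" using N n by simp
      then show ?thesis using e by (simp add: field_simps)
    qed
    have "norm (real (cnt A B b n) / real n - b) = \<bar>real (cnt A B b n) - b * real n\<bar> / real n"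
      using npos by (simp add: field_simps abs_div_pos[symmetric] del: abs_div_pos) 
    also have "\<dots> \<le> (2 * e * real n + K) / real n"
      using npos bnd by (intro divide_right_mono) auto
    also have "\<dots> < (3 * e * real n) / real n"
      using npos \<open>K < e * real n\<close> by (intro divide_strict_right_mono) auto
    also have "\<dots> = 3 * e" using npos by simp
    also have "\<dots> < r" using r by (simp add: e_def)
    finally show "norm (real (cnt A B b n) / real n - b) < r" .
  qed
qed

lemma density_eq: "has_density S c \<Longrightarrow> density S = c"
  unfolding has_density_def density_def by (rule limI)

theorem corollary3p6:
  assumes "A \<in> density_sets" and "B \<in> density_sets"
    and "density A < density B"
  shows "\<exists>D \<in> density_sets. A \<subseteq> D \<and> D \<subseteq> A \<union> B \<and> density D = density B"
proof -
  obtain a where a: "has_density A a" using assms(1) by (auto simp: density_sets_def)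
  obtain b where b: "has_density B b" using assms(2) by (auto simp: density_sets_def)
  have da: "density A = a" and db: "density B = b" using a b density_eq by auto
  have ab: "a \<le> b" using assms(3) da db by simp
  have hd: "has_density (Dset A B b) b" by (rule main[OF a b ab])
  have A1: "A \<subseteq> {1..}" using assms(1) by (simp add: density_sets_def)
  have "Dset A B b \<in> density_sets" using hd by (auto simp: density_sets_def Dset_def)
  moreover have "A \<subseteq> Dset A B b" using A1 by (auto simp: Dset_def)
  moreover have "Dset A B b \<subseteq> A \<union> B" by (auto simp: Dset_def)
  moreover have "density (Dset A B b) = density B" using density_eq[OF hd] db by simp
  ultimately show ?thesis by blast
qed

end
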